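(* Let $\mathbb{R}^{2n}$ have coordinates $(x_1,y_1,x_2,y_2,\dots,x_n,y_n)$. Consider symplectic forms $\omega_1 = \sum_{i=1}^n f_i(x_i,y_i)\,dx_i\wedge dy_i$ and $\omega_2 = \sum_{i=1}^n g_i(x_i,y_i)\,dx_i\wedge dy_i$, where $f_i,g_i:\mathbb{R}^2\to\mathbb{R}$ are smooth and nowhere vanishing. Suppose $\varphi = (\varphi^1,\dots,\varphi^{2n}) \in \operatorname{Symp}(\mathbb{R}^{2n},\omega_{\mathrm{std}})$ satisfies $\varphi^*\omega_1 = \omega_2$. Then for every point $x \in \mathbb{R}^{2n}$, the multisets $\{f_i(\varphi^{2i-1}(x),\varphi^{2i}(x)) : 1\le i\le n\}$ and $\{g_i(x_i,y_i) : 1\le i\le n\}$ coincide (counted with multiplicity).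
   Context: $\omega_{\mathrm{std}} = \sum_{i=1}^n dx_i\wedge dy_i$ in these coordinates. $\operatorname{Symp}(\mathbb{R}^{2n},\omega_{\mathrm{std}})$ is the set of diffeomorphisms $\varphi$ of $\mathbb{R}^{2n}$ with $\varphi^*\omega_{\mathrm{std}} = \omega_{\mathrm{std}}$, where $(\varphi^*\omega)(x)(v,w) = \omega(\varphi(x))(d\varphi_x v, d\varphi_x w)$. *)

theory Defs
  imports "HOL-Analysis.Analysis" "HOL-Library.Multiset"
begin

text \<open>Points of R^(2n) are modelled as (real \<times> real)^'n: the i-th component p$i is
  the coordinate pair (x_i, y_i).\<close>

text \<open>C-infinity smoothness: there is a family of iterated directional derivatives
  F [v1,...,vk] x = D^k f(x)[v1,...,vk], each of which is (Frechet) differentiable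
  everywhere with derivative h \<mapsto> F (h # vs) x.\<close>
definition smooth :: "('a::real_normed_vector \<Rightarrow> 'b::real_normed_vector) \<Rightarrow> bool" where
  "smooth f \<longleftrightarrow> (\<exists>F :: 'a list \<Rightarrow> 'a \<Rightarrow> 'b. F [] = f \<and>
      (\<forall>vs x. (F vs has_derivative (\<lambda>h. F (h # vs) x)) (at x)))"

definition diffeomorphism :: "('a::real_normed_vector \<Rightarrow> 'a) \<Rightarrow> bool" where
  "diffeomorphism \<phi> \<longleftrightarrow> bij \<phi> \<and> smooth \<phi> \<and> smooth (inv \<phi>)"

text \<open>The 2-form \<Sum>_i f_i(x_i,y_i) dx_i \<and> dy_i evaluated at point p on vectors v, w.\<close>
definition split_form :: "('n::finite \<Rightarrow> real \<times> real \<Rightarrow> real) \<Rightarrow>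
    (real \<times> real)^'n \<Rightarrow> (real \<times> real)^'n \<Rightarrow> (real \<times> real)^'n \<Rightarrow> real" where
  "split_form f p v w = (\<Sum>i\<in>UNIV. f i (p $ i) *
      (fst (v $ i) * snd (w $ i) - snd (v $ i) * fst (w $ i)))"

definition omega_std :: "(real \<times> real)^'n::finite \<Rightarrow> (real \<times> real)^'n \<Rightarrow> (real \<times> real)^'n \<Rightarrow> real" where
  "omega_std = split_form (\<lambda>i z. 1)"

definition pullback :: "('a::real_normed_vector \<Rightarrow> 'a) \<Rightarrow> ('a \<Rightarrow> 'a \<Rightarrow> 'a \<Rightarrow> real) \<Rightarrow>
    ('a \<Rightarrow> 'a \<Rightarrow> 'a \<Rightarrow> real)" where
  "pullback \<phi> \<omega> = (\<lambda>x v w. \<omega> (\<phi> x) (frechet_derivative \<phi> (at x) v) (frechet_derivative \<phi> (at x) w))"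

definition Symp_std :: "((real \<times> real)^'n::finite \<Rightarrow> (real \<times> real)^'n) set" where
  "Symp_std = {\<phi>. diffeomorphism \<phi> \<and> pullback \<phi> omega_std = omega_std}"

end

theory Submission imports Defs begin

definition Esp :: "('n::finite \<Rightarrow> real) \<Rightarrow> real \<Rightarrow> ((real \<times> real)^'n) set" where
  "Esp h c = {v. \<forall>i. h i \<noteq> c \<longrightarrow> v $ i = 0}"

lemma Esp_dim: fixes h :: "'n::finite \<Rightarrow> real" shows "dim (Esp h c) = 2 * card {i. h i = c}"
proof -
  let ?d = "(\<lambda>(i,u). axis i u) ` ({i. h i = c} \<times> (Basis :: (real\<times>real) set))"
  have dB: "?d \<subseteq> Basis" by (auto simp: Basis_vec_def)
  have pz: "z = 0 \<longleftrightarrow> (\<forall>u\<in>(Basis::(real\<times>real) set). z \<bullet> u = 0)" for z :: "real \<times> real"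
    by (metis euclidean_all_zero_iff)
  have eq: "Esp h c = {x. \<forall>b\<in>Basis. b \<notin> ?d \<longrightarrow> x \<bullet> b = 0}"
  proof (rule set_eqI, rule iffI)
    fix x assume "x \<in> Esp h c"
    then show "x \<in> {x. \<forall>b\<in>Basis. b \<notin> ?d \<longrightarrow> x \<bullet> b = 0}"
      by (auto simp: Esp_def Basis_vec_def inner_axis)
  next
    fix x assume a: "x \<in> {x. \<forall>b\<in>Basis. b \<notin> ?d \<longrightarrow> x \<bullet> b = 0}"
    show "x \<in> Esp h c" unfolding Esp_def
    proof (clarify)
      fix i :: 'n assume hi: "h i \<noteq> c"
      have "x $ i \<bullet> u = 0" if "u \<in> Basis" for u
      proof -
        have b1: "axis i u \<in> (Basis :: ((real\<times>real)^'n) set)" using that by (auto simp: Basis_vec_def)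
        have b2: "axis i u \<notin> ?d" using hi that
          by (auto simp: axis_eq_axis nonzero_Basis)
        have "x \<bullet> axis i u = 0" using a b1 b2 by blast
        then show ?thesis by (simp add: inner_axis)
      qed
      then show "x $ i = 0" using pz by blast
    qed
  qed
  have inj: "inj_on (\<lambda>(i,u). axis i u) ({i. h i = c} \<times> (Basis :: (real\<times>real) set))"
    by (auto simp: inj_on_def axis_eq_axis nonzero_Basis)
  have "card ?d = card {i. h i = c} * 2"
    using card_image[OF inj] by (simp add: card_cartesian_product)
  then show ?thesis using dim_substandard[OF dB] eq by simp
qed

definition sc :: "('n::finite \<Rightarrow> real) \<Rightarrow> (real \<times> real)^'n \<Rightarrow> (real \<times> real)^'n" where
  "sc h v = (\<chi> i. h i *\<^sub>R (v $ i))"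

lemma sc_Esp: "sc h v = c *\<^sub>R v \<longleftrightarrow> v \<in> Esp h c"
  by (auto simp: sc_def Esp_def vec_eq_iff scaleR_cancel_right)

lemma split_sc: "split_form h p v w = omega_std p (sc (\<lambda>i. h i (p $ i)) v) w"
  unfolding split_form_def omega_std_def sc_def
  by (rule sum.cong) (auto simp: algebra_simps)

lemma omega_diff: "omega_std p (u1 - u2) w = omega_std p u1 w - omega_std p u2 w"
  unfolding split_form_def omega_std_def
  by (simp add: sum_subtractf[symmetric] algebra_simps)

lemma omega_zero: "omega_std p 0 w = 0"
  unfolding split_form_def omega_std_def by simp

lemma omega_axis: "omega_std p u (axis i z) = fst (u $ i) * snd z - snd (u $ i) * fst z"
  unfolding split_form_def omega_std_def axis_def
  by (simp add: if_distrib cong: if_cong)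

lemma omega_nondeg: assumes "\<And>w. omega_std p u w = 0" shows "u = 0"
proof -
  have "u $ i = 0" for i
    using assms[of "axis i (0,1)"] assms[of "axis i (1,0)"]
    by (simp add: omega_axis prod_eq_iff)
  then show ?thesis by (simp add: vec_eq_iff)
qed

theorem theorem2p5:
  fixes f g :: "'n::finite \<Rightarrow> real \<times> real \<Rightarrow> real"
    and \<phi> :: "(real \<times> real)^'n \<Rightarrow> (real \<times> real)^'n"
  assumes f_smooth: "\<And>i. smooth (f i)" and f_nz: "\<And>i z. f i z \<noteq> 0"
    and g_smooth: "\<And>i. smooth (g i)" and g_nz: "\<And>i z. g i z \<noteq> 0"
    and symp: "\<phi> \<in> Symp_std"
    and pull: "pullback \<phi> (split_form f) = split_form g"
  shows "\<forall>x. image_mset (\<lambda>i. f i (\<phi> x $ i)) (mset_set UNIV)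
           = image_mset (\<lambda>i. g i (x $ i)) (mset_set UNIV)"
proof
  fix x
  define A where "A = frechet_derivative \<phi> (at x)"
  define Fs where "Fs = (\<lambda>i. f i (\<phi> x $ i))"
  define Gs where "Gs = (\<lambda>i. g i (x $ i))"
  have sm: "smooth \<phi>" and ps: "pullback \<phi> omega_std = omega_std"
    using symp by (auto simp: Symp_std_def diffeomorphism_def)
  then obtain F where F0: "F [] = \<phi>" and Fd: "\<And>vs x. (F vs has_derivative (\<lambda>h. F (h # vs) x)) (at x)"
    unfolding smooth_def by blast
  have "\<phi> differentiable at x" using Fd[of "[]" x] F0 by (auto simp: differentiable_def)
  then have "(\<phi> has_derivative A) (at x)" unfolding A_def by (rule frechet_derivative_works[THEN iffD1])
  then have lin: "linear A" by (rule has_derivative_linear)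
  have S: "omega_std (\<phi> x) (A v) (A w) = omega_std x v w" for v w
    using fun_cong[OF fun_cong[OF fun_cong[OF ps, of x], of v], of w]
    by (simp add: pullback_def A_def)
  have P: "split_form f (\<phi> x) (A v) (A w) = split_form g x v w" for v w
    using fun_cong[OF fun_cong[OF fun_cong[OF pull, of x], of v], of w]
    by (simp add: pullback_def A_def)
  have inj: "inj A"
  proof (rule injI)
    fix v w assume "A v = A w"
    then have "A (v - w) = 0" using lin by (simp add: linear_diff)
    then have "omega_std x (v - w) u = 0" for u using S[of "v - w" u] by (simp add: omega_zero)
    then show "v = w" using omega_nondeg by force
  qed
  have surj: "surj A" using linear_injective_imp_surjective[OF lin inj] by simp
  have key: "sc Fs (A v) = A (sc Gs v)" for v
  proof -
    have "omega_std (\<phi> x) (sc Fs (A v) - A (sc Gs v)) u = 0" for u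
    proof -
      obtain w where u: "u = A w" using surj by (metis surjD)
      show ?thesis using P[of v w] S[of "sc Gs v" w]
        by (simp add: u omega_diff split_sc Fs_def Gs_def)
    qed
    then show ?thesis using omega_nondeg by force
  qed
  have img: "A ` Esp Gs c = Esp Fs c" for c
  proof (rule set_eqI, rule iffI)
    fix u assume "u \<in> A ` Esp Gs c"
    then obtain v where u: "u = A v" and v: "v \<in> Esp Gs c" by blast
    have "sc Fs u = c *\<^sub>R u" using key[of v] v
      by (simp add: u sc_Esp[symmetric] linear_scale[OF lin])
    then show "u \<in> Esp Fs c" by (simp add: sc_Esp)
  next
    fix u assume u: "u \<in> Esp Fs c"
    obtain v where uv: "u = A v" using surj by (metis surjD)
    have "A (sc Gs v) = A (c *\<^sub>R v)" using key[of v] u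
      by (simp add: uv sc_Esp[symmetric] linear_scale[OF lin])
    then have "sc Gs v = c *\<^sub>R v" using inj by (simp add: inj_eq)
    then show "u \<in> A ` Esp Gs c" by (simp add: sc_Esp uv)
  qed
  have card: "card {i. Fs i = c} = card {i. Gs i = c}" for c
  proof -
    have "dim (Esp Fs c) = dim (Esp Gs c)"
      using dim_image_eq[OF lin, of "Esp Gs c"] inj img[of c] by (metis inj_on_subset subset_UNIV)
    then show ?thesis by (simp add: Esp_dim)
  qed
  show "image_mset Fs (mset_set UNIV) = image_mset Gs (mset_set UNIV)"
  proof (rule multiset_eqI)
    fix c
    have "count (image_mset h (mset_set (UNIV::'n set))) c = card {i. h i = c}" for h :: "'n \<Rightarrow> real"
    proof -
      have "count (image_mset h (mset_set (UNIV::'n set))) c = (\<Sum>y\<in>h -` {c}. 1)"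
        unfolding count_image_mset by (rule sum.cong) auto
      also have "\<dots> = card {i. h i = c}" by (simp add: vimage_def)
      finally show ?thesis .
    qed
    then show "count (image_mset Fs (mset_set UNIV)) c = count (image_mset Gs (mset_set UNIV)) c"
      using card by simp
  qed
qed

end
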